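(* Let $L$ be a metric flag triangulation of $\mathbb{S}^2$ which is not the boundary of a $3$-simplex, and let $s$ be a Euclidean vertex of $L$. (a) If $s$ is $3$-Euclidean, then the link $L_s$ and the star $\mathrm{St}_L(s)$ are full subcomplexes of $L$. (b) If $s$ is $4$-Euclidean and $L$ is not the suspension of a $3$-gon, then $L_s$ and $\mathrm{St}_L(s)$ are full subcomplexes of $L$.
   Context: A simplicial complex with edges labeled by integers $\ge 2$ is metric flag if it is the labeled nerve of a Coxeter system $(W,S)$: the vertex set is $S$, a nonempty subset $T\subseteq S$ spans a simplex iff the subgroup $W_T$ generated by $T$ is finite, and the edge $\{s,t\}$ is labeled $m_{st}$ (the order of $st$). A subcomplex is full if every simplex of $L$ whose vertices lie in the subcomplex belongs to it. For a vertex $s$: the star $\mathrm{St}_L(s)$ is the subcomplex of all closed simplices containing $s$; the link $L_s$ is the subcomplex of all closed simplices contained in simplices containing $s$ but not containing $s$; the valence of $s$ is the number of vertices of $L_s$. A vertex $s$ is $3$-Euclidean if it has valence $3$ and its link vertices $s_0,s_1,s_2$ satisfy $\pi/m_{s_0s_1}+\pi/m_{s_1s_2}+\pi/m_{s_2s_0}=\pi$; it is $4$-Euclidean if it has valence $4$ and its link is a $4$-cycle $s_0s_1s_2s_3$ with $m_{s_is_{i+1}}=2$ for all $i$ (mod $4$); it is Euclidean if it is $3$- or $4$-Euclidean. $L$ is the suspension of an $n$-gon if it is the simplicial join of two non-adjacent vertices (the suspension points) with an $n$-cycle. *)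

theory Defs
  imports "HOL-Analysis.Analysis"
begin

text \<open>Coxeter matrices on a generating set S. The value m s t = 0 encodes m_st = infinity.\<close>
definition coxeter_matrix :: "'a set \<Rightarrow> ('a \<Rightarrow> 'a \<Rightarrow> nat) \<Rightarrow> bool" where
  "coxeter_matrix S m \<longleftrightarrow>
     (\<forall>s\<in>S. m s s = 1) \<and> (\<forall>s\<in>S. \<forall>t\<in>S. m s t = m t s) \<and>
     (\<forall>s\<in>S. \<forall>t\<in>S. s \<noteq> t \<longrightarrow> m s t \<noteq> 1)"

definition alt_word :: "'a \<Rightarrow> 'a \<Rightarrow> nat \<Rightarrow> 'a list" where
  "alt_word s t k = concat (replicate k [s, t])"

text \<open>Equality of words in the Coxeter group W presented by
  < S | s^2 = 1, (st)^(m_st) = 1 for m_st finite >: the congruence on words generated by the relations.\<close>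
inductive cox_eq :: "'a set \<Rightarrow> ('a \<Rightarrow> 'a \<Rightarrow> nat) \<Rightarrow> 'a list \<Rightarrow> 'a list \<Rightarrow> bool"
  for S m where
  refl: "cox_eq S m w w"
| sym: "cox_eq S m u w \<Longrightarrow> cox_eq S m w u"
| trans: "cox_eq S m u v \<Longrightarrow> cox_eq S m v w \<Longrightarrow> cox_eq S m u w"
| cong: "cox_eq S m x y \<Longrightarrow> cox_eq S m (u @ x @ v) (u @ y @ v)"
| invol: "s \<in> S \<Longrightarrow> cox_eq S m [s, s] []"
| braid: "s \<in> S \<Longrightarrow> t \<in> S \<Longrightarrow> m s t \<noteq> 0 \<Longrightarrow> cox_eq S m (alt_word s t (m s t)) []"

definition cox_elem :: "'a set \<Rightarrow> ('a \<Rightarrow> 'a \<Rightarrow> nat) \<Rightarrow> 'a list \<Rightarrow> 'a list set" where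
  "cox_elem S m w = {v. cox_eq S m w v}"

definition special_subgroup :: "'a set \<Rightarrow> ('a \<Rightarrow> 'a \<Rightarrow> nat) \<Rightarrow> 'a set \<Rightarrow> 'a list set set" where
  "special_subgroup S m T = cox_elem S m ` lists T"

definition nerve :: "'a set \<Rightarrow> ('a \<Rightarrow> 'a \<Rightarrow> nat) \<Rightarrow> 'a set set" where
  "nerve S m = {T. T \<noteq> {} \<and> finite T \<and> T \<subseteq> S \<and> finite (special_subgroup S m T)}"

text \<open>Simplicial complexes are represented as sets of (finite nonempty) vertex sets.\<close>
definition verts :: "'a set set \<Rightarrow> 'a set" where
  "verts K = \<Union>K"

text \<open>Geometric realization, inside the function space 'a => real (product topology).\<close>
definition realization :: "'a set set \<Rightarrow> ('a \<Rightarrow> real) set" where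
  "realization K = {x. \<exists>\<sigma>\<in>K. (\<forall>v. v \<notin> \<sigma> \<longrightarrow> x v = 0) \<and> (\<forall>v. 0 \<le> x v) \<and> sum x \<sigma> = 1}"

definition triangulates_S2 :: "'a set set \<Rightarrow> bool" where
  "triangulates_S2 K \<longleftrightarrow> finite (verts K) \<and> (\<forall>\<sigma>\<in>K. \<sigma> \<noteq> {}) \<and>
     realization K homeomorphic sphere (0 :: real^3) 1"

definition boundary_of_3simplex :: "'a set set \<Rightarrow> bool" where
  "boundary_of_3simplex K \<longleftrightarrow> (\<exists>V. card V = 4 \<and> K = {\<sigma>. \<sigma> \<noteq> {} \<and> \<sigma> \<subset> V})"

definition star :: "'a set set \<Rightarrow> 'a \<Rightarrow> 'a set set" where
  "star K s = {\<tau>\<in>K. \<exists>\<sigma>\<in>K. s \<in> \<sigma> \<and> \<tau> \<subseteq> \<sigma>}"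

definition link :: "'a set set \<Rightarrow> 'a \<Rightarrow> 'a set set" where
  "link K s = {\<tau>\<in>K. \<exists>\<sigma>\<in>K. s \<in> \<sigma> \<and> \<tau> \<subseteq> \<sigma> \<and> s \<notin> \<tau>}"

definition valence :: "'a set set \<Rightarrow> 'a \<Rightarrow> nat" where
  "valence K s = card (verts (link K s))"

definition full_subcomplex :: "'a set set \<Rightarrow> 'a set set \<Rightarrow> bool" where
  "full_subcomplex K M \<longleftrightarrow> M \<subseteq> K \<and> (\<forall>\<sigma>\<in>K. \<sigma> \<subseteq> verts M \<longrightarrow> \<sigma> \<in> M)"

definition three_euclidean :: "'a set set \<Rightarrow> ('a \<Rightarrow> 'a \<Rightarrow> nat) \<Rightarrow> 'a \<Rightarrow> bool" where
  "three_euclidean K m s \<longleftrightarrow> valence K s = 3 \<and>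
     (\<exists>s0 s1 s2. verts (link K s) = {s0, s1, s2} \<and>
        pi / real (m s0 s1) + pi / real (m s1 s2) + pi / real (m s2 s0) = pi)"

definition cycle_complex :: "nat \<Rightarrow> (nat \<Rightarrow> 'a) \<Rightarrow> 'a set set" where
  "cycle_complex n c = {{c i} | i. i < n} \<union> {{c i, c ((i + 1) mod n)} | i. i < n}"

definition is_cycle :: "'a set set \<Rightarrow> nat \<Rightarrow> (nat \<Rightarrow> 'a) \<Rightarrow> bool" where
  "is_cycle C n c \<longleftrightarrow> 3 \<le> n \<and> inj_on c {..<n} \<and> C = cycle_complex n c"

definition four_euclidean :: "'a set set \<Rightarrow> ('a \<Rightarrow> 'a \<Rightarrow> nat) \<Rightarrow> 'a \<Rightarrow> bool" where
  "four_euclidean K m s \<longleftrightarrow> valence K s = 4 \<and>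
     (\<exists>c. is_cycle (link K s) 4 c \<and> (\<forall>i<4. m (c i) (c ((i + 1) mod 4)) = 2))"

definition suspension :: "'a \<Rightarrow> 'a \<Rightarrow> 'a set set \<Rightarrow> 'a set set" where
  "suspension a b C = {\<sigma> \<union> \<tau> | \<sigma> \<tau>. \<sigma> \<in> {{}, {a}, {b}} \<and> \<tau> \<in> insert {} C \<and> \<sigma> \<union> \<tau> \<noteq> {}}"

definition suspension_of_ngon :: "'a set set \<Rightarrow> nat \<Rightarrow> bool" where
  "suspension_of_ngon K n \<longleftrightarrow> (\<exists>a b c. a \<noteq> b \<and> a \<notin> c ` {..<n} \<and> b \<notin> c ` {..<n} \<and>
     is_cycle (cycle_complex n c) n c \<and> K = suspension a b (cycle_complex n c))"

end

theory Submission
  imports Defs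
begin

lemma L0_top:
  fixes R :: "('a \<Rightarrow> real) set" and \<phi> :: "('a \<Rightarrow> real) \<Rightarrow> real^2"
  assumes hom: "R homeomorphic sphere (0::real^3) 1"
    and UR: "U \<subseteq> R" and Uo: "openin (top_of_set R) U" and pU: "p \<in> U"
    and contp: "continuous_on U \<phi>" and injp: "inj_on \<phi> U" and p0: "\<phi> p = 0"
    and pos: "\<And>x. x \<in> U \<Longrightarrow> \<phi> x $ 2 \<ge> 0"
  shows False
proof -
  obtain h k where hk: "homeomorphism R (sphere (0::real^3) 1) h k"
    using hom unfolding homeomorphic_def by blast
  have o1: "openin (top_of_set (sphere (0::real^3) 1)) (h ` U)"
    using homeomorphism_imp_open_map[OF hk Uo] .
  have kh: "\<And>x. x \<in> U \<Longrightarrow> k (h x) = x" using hk UR homeomorphism_apply1 by blast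
  have khU: "k ` h ` U = U"
  proof -
    have "(\<lambda>x. k (h x)) ` U = (\<lambda>x. x) ` U" by (rule image_cong) (auto simp: kh)
    then show ?thesis by (simp add: image_image)
  qed
  have cont: "continuous_on (h ` U) (\<phi> \<circ> k)"
  proof (rule continuous_on_compose)
    have "h ` U \<subseteq> sphere 0 1" using hk UR homeomorphism_image1 by blast
    then show "continuous_on (h ` U) k" using homeomorphism_cont2[OF hk] continuous_on_subset by blast
    show "continuous_on (k ` h ` U) \<phi>" using contp khU by simp
  qed
  have inj: "inj_on (\<phi> \<circ> k) (h ` U)"
    using injp kh unfolding inj_on_def by (metis comp_apply imageE)
  have "openin (top_of_set UNIV) ((\<phi> \<circ> k) ` (h ` U))"
    by (rule invariance_of_domain_sphere_affine_set[OF cont inj _ _ _ _ o1]) auto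
  moreover have "(\<phi> \<circ> k) ` (h ` U) = \<phi> ` U" by (metis khU image_comp)
  ultimately have op: "open (\<phi> ` U)" by simp
  have "0 \<in> \<phi> ` U" using pU p0 by (metis imageI)
  then obtain e where e: "e > 0" "ball 0 e \<subseteq> \<phi> ` U"
    using op open_contains_ball by blast
  define y :: "real^2" where "y = (- e/2) *\<^sub>R axis 2 1"
  have "norm y = e/2" using e by (simp add: y_def)
  then have "y \<in> \<phi> ` U" using e by (auto simp: dist_norm)
  then obtain x where "x \<in> U" "\<phi> x = y" by blast
  then have "0 \<le> y $ 2" using pos by blast
  then show False using e by (simp add: y_def axis_def)
qed

lemma GL_top:
  fixes R :: "('a \<Rightarrow> real) set" and g :: "real^3 \<Rightarrow> ('a \<Rightarrow> real)"
  assumes hom: "R homeomorphic sphere (0::real^3) 1"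
    and contg: "continuous_on (sphere 0 1) g" and injg: "inj_on g (sphere 0 1)"
    and gR: "g ` sphere 0 1 \<subseteq> R"
  shows "g ` sphere 0 1 = R"
proof (rule ccontr)
  assume "g ` sphere 0 1 \<noteq> R"
  then obtain r where rR: "r \<in> R" and rg: "r \<notin> g ` sphere 0 1" using gR by blast
  obtain h k where hk: "homeomorphism R (sphere (0::real^3) 1) h k"
    using hom unfolding homeomorphic_def by blast
  define q where "q = h r"
  have qS: "q \<in> sphere 0 1" using hk rR homeomorphism_image1 q_def by blast
  have Fq: "h (g u) \<noteq> q" if "u \<in> sphere 0 1" for u
  proof
    assume "h (g u) = q"
    then have "k (h (g u)) = k (h r)" by (simp add: q_def)
    moreover have "g u \<in> R" using gR that by blast
    ultimately have "g u = r" using homeomorphism_apply1[OF hk] rR by metis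
    then show False using rg that by blast
  qed
  have "(sphere (0::real^3) 1 - {q}) homeomorphic (UNIV :: (real^2) set)"
    by (rule homeomorphic_punctured_sphere_affine) (use qS in auto)
  then obtain \<pi> \<rho> where pr: "homeomorphism (sphere (0::real^3) 1 - {q}) (UNIV :: (real^2) set) \<pi> \<rho>"
    unfolding homeomorphic_def by blast
  define G where "G = \<pi> \<circ> (h \<circ> g)"
  have hgS: "(h \<circ> g) ` sphere 0 1 \<subseteq> sphere 0 1 - {q}"
    using Fq gR hk homeomorphism_image1 by fastforce
  have contG: "continuous_on (sphere 0 1) G"
    unfolding G_def
  proof (rule continuous_on_compose)
    show "continuous_on (sphere 0 1) (h \<circ> g)"
      by (rule continuous_on_compose[OF contg]) (meson continuous_on_subset gR hk homeomorphism_cont1)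
    show "continuous_on ((h \<circ> g) ` sphere 0 1) \<pi>"
      using homeomorphism_cont1[OF pr] hgS continuous_on_subset by blast
  qed
  have injG: "inj_on G (sphere 0 1)"
    unfolding inj_on_def G_def
  proof (intro ballI impI)
    fix x y :: "real^3" assume xy: "x \<in> sphere 0 1" "y \<in> sphere 0 1" "(\<pi> \<circ> (h \<circ> g)) x = (\<pi> \<circ> (h \<circ> g)) y"
    have "h (g x) \<in> sphere 0 1 - {q}" "h (g y) \<in> sphere 0 1 - {q}" using hgS xy(1,2) by (simp_all add: image_subset_iff del: mem_sphere)
    then have e1: "h (g x) = h (g y)" using xy(3) homeomorphism_apply1[OF pr] by (metis comp_apply)
    have gx: "g x \<in> R" and gy: "g y \<in> R" using gR xy(1,2) by auto
    have "g x = k (h (g x))" using homeomorphism_apply1[OF hk gx] by simp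
    also have "\<dots> = k (h (g y))" using e1 by simp
    also have "\<dots> = g y" using homeomorphism_apply1[OF hk gy] by simp
    finally have "g x = g y" .
    then show "x = y" using inj_onD[OF injg _ xy(1,2)] by blast
  qed
  have "openin (top_of_set UNIV) (G ` sphere 0 1)"
    by (rule invariance_of_domain_sphere_affine_set[OF contG injG _ _ _ _ openin_subtopology_self]) auto
  then have op: "open (G ` sphere 0 1)" by simp
  have co: "compact (G ` sphere 0 1)"
    by (rule compact_continuous_image[OF contG]) simp
  have "G ` sphere 0 1 \<noteq> {}" by (simp add: sphere_eq_empty)
  then show False using compact_open[of "G ` sphere 0 1"] op co by simp
qed

lemma inj_sphere_rec:
  fixes g :: "real^3 \<Rightarrow> 'b" and L :: "'b \<Rightarrow> real^3"
  assumes "\<And>u. u \<in> sphere 0 1 \<Longrightarrow> \<exists>t>0. L (g u) = t *\<^sub>R u"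
  shows "inj_on g (sphere 0 1)"
proof -
  have key: "u = L (g u) /\<^sub>R norm (L (g u))" if uu: "u \<in> sphere 0 1" for u
  proof -
    obtain t where t: "t > 0" "L (g u) = t *\<^sub>R u" using assms[OF uu] by blast
    have "norm u = 1" using uu by simp
    then show ?thesis using t by simp
  qed
  show ?thesis unfolding inj_on_def using key by metis
qed

lemma GEN:
  fixes K K' :: "'a set set" and V :: "'a set" and b :: "real^3 \<Rightarrow> 'a \<Rightarrow> real" and p :: "'a \<Rightarrow> real^3"
  assumes tri: "triangulates_S2 K"
    and down: "\<And>\<sigma> \<tau>. \<sigma> \<in> K \<Longrightarrow> \<tau> \<noteq> {} \<Longrightarrow> \<tau> \<subseteq> \<sigma> \<Longrightarrow> \<tau> \<in> K"
    and KK: "K' \<subseteq> K" and finV: "finite V"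
    and cont: "\<And>v. v \<in> V \<Longrightarrow> continuous_on (sphere 0 1) (\<lambda>u. b u v)"
    and nonneg: "\<And>u v. u \<in> sphere 0 1 \<Longrightarrow> v \<in> V \<Longrightarrow> b u v \<ge> 0"
    and Dpos: "\<And>u. u \<in> sphere 0 1 \<Longrightarrow> (\<Sum>v\<in>V. b u v) > 0"
    and supp: "\<And>u. u \<in> sphere 0 1 \<Longrightarrow> \<exists>\<sigma>\<in>K'. \<sigma> \<subseteq> V \<and> (\<forall>v\<in>V-\<sigma>. b u v = 0)"
    and rec: "\<And>u. u \<in> sphere 0 1 \<Longrightarrow> (\<Sum>v\<in>V. b u v *\<^sub>R p v) = u"
  shows "\<forall>\<tau>\<in>K. \<exists>\<sigma>\<in>K'. \<tau> \<subseteq> \<sigma>"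
proof -
  define D where "D u = (\<Sum>v\<in>V. b u v)" for u
  define g where "g u = (\<lambda>v. if v \<in> V then b u v / D u else 0)" for u
  have contg: "continuous_on (sphere 0 1) g"
    unfolding g_def
  proof (rule continuous_on_coordinatewise_then_product)
    fix v
    show "continuous_on (sphere 0 1) (\<lambda>u. if v \<in> V then b u v / D u else 0)"
    proof (cases "v \<in> V")
      case True
      have "continuous_on (sphere 0 1) D" unfolding D_def
        by (rule continuous_on_sum) (use cont in auto)
      moreover have "\<forall>u\<in>sphere 0 1. D u \<noteq> 0" using Dpos D_def by (metis less_irrefl)
      ultimately show ?thesis using True cont
        by (auto intro!: continuous_on_divide)
    qed simp
  qed
  have injg: "inj_on g (sphere 0 1)"
  proof (rule inj_sphere_rec[where L = "\<lambda>x. \<Sum>v\<in>V. x v *\<^sub>R p v"])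
    fix u :: "real^3" assume u: "u \<in> sphere 0 1"
    have "(\<Sum>v\<in>V. g u v *\<^sub>R p v) = (\<Sum>v\<in>V. (1 / D u) *\<^sub>R (b u v *\<^sub>R p v))"
      by (rule sum.cong) (auto simp: g_def)
    also have "\<dots> = (1 / D u) *\<^sub>R (\<Sum>v\<in>V. b u v *\<^sub>R p v)" by (simp only: scaleR_sum_right)
    also have "\<dots> = (1 / D u) *\<^sub>R u" using rec[OF u] by simp
    finally show "\<exists>t>0. (\<Sum>v\<in>V. g u v *\<^sub>R p v) = t *\<^sub>R u"
      using Dpos[OF u] D_def by (metis zero_less_divide_1_iff)
  qed
  have gR: "g ` sphere 0 1 \<subseteq> realization K"
  proof
    fix x assume "x \<in> g ` sphere 0 1"
    then obtain u where u: "u \<in> sphere 0 1" and x: "x = g u" by blast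
    obtain \<sigma> where \<sigma>: "\<sigma> \<in> K'" "\<sigma> \<subseteq> V" "\<forall>v\<in>V-\<sigma>. b u v = 0" using supp[OF u] by blast
    have z: "\<forall>v. v \<notin> \<sigma> \<longrightarrow> x v = 0" using \<sigma> by (auto simp: x g_def)
    have nn: "\<forall>v. 0 \<le> x v" using nonneg[OF u] Dpos[OF u] by (auto simp: x g_def D_def)
    have "sum x \<sigma> = sum x V"
      by (rule sum.mono_neutral_left) (use finV \<sigma> z in auto)
    also have "\<dots> = (\<Sum>v\<in>V. b u v / D u)" by (rule sum.cong) (auto simp: x g_def)
    also have "\<dots> = 1" using Dpos[OF u] by (simp add: D_def sum_divide_distrib[symmetric])
    finally have "sum x \<sigma> = 1" .
    then show "x \<in> realization K" unfolding realization_def using \<sigma> KK z nn by blast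
  qed
  have hom: "realization K homeomorphic sphere (0::real^3) 1" using tri triangulates_S2_def by blast
  have img: "g ` sphere 0 1 = realization K" by (rule GL_top[OF hom contg injg gR])
  show ?thesis
  proof
    fix \<tau> assume \<tau>: "\<tau> \<in> K"
    have fin: "finite \<tau>" using tri \<tau> unfolding triangulates_S2_def verts_def
      by (meson Union_upper finite_subset)
    have ne: "\<tau> \<noteq> {}" using tri \<tau> unfolding triangulates_S2_def by blast
    define y where "y = (\<lambda>v. if v \<in> \<tau> then 1 / real (card \<tau>) else 0)"
    have cpos: "card \<tau> > 0" using fin ne by (simp add: card_gt_0_iff)
    have "sum y \<tau> = 1" using cpos by (simp add: y_def)
    then have "y \<in> realization K" unfolding realization_def using \<tau> by (auto simp: y_def)
    then obtain u where u: "u \<in> sphere 0 1" "y = g u" using img by blast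
    obtain \<sigma> where \<sigma>: "\<sigma> \<in> K'" "\<sigma> \<subseteq> V" "\<forall>v\<in>V-\<sigma>. b u v = 0" using supp[OF u(1)] by blast
    have "\<tau> \<subseteq> \<sigma>"
    proof
      fix v assume "v \<in> \<tau>"
      then have "y v \<noteq> 0" using cpos by (simp add: y_def)
      then have "g u v \<noteq> 0" using u by simp
      then show "v \<in> \<sigma>" using \<sigma> by (auto simp: g_def split: if_splits)
    qed
    then show "\<exists>\<sigma>\<in>K'. \<tau> \<subseteq> \<sigma>" using \<sigma> by blast
  qed
qed

lemma VL3:
  fixes K :: "'a set set"
  assumes tri: "triangulates_S2 K" and sK: "{s} \<in> K"
    and d: "a \<noteq> b" "a \<noteq> c" "b \<noteq> c" "s \<noteq> a" "s \<noteq> b" "s \<noteq> c"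
    and st: "\<And>\<sigma>. \<sigma> \<in> K \<Longrightarrow> s \<in> \<sigma> \<Longrightarrow> \<sigma> \<subseteq> {s,a,c} \<or> \<sigma> \<subseteq> {s,b,c}"
  shows False
proof -
  define R where "R = realization K"
  define U where "U = R \<inter> {x. 0 < x s}"
  define p :: "'a \<Rightarrow> real" where "p = (\<lambda>v. if v = s then 1 else 0)"
  define \<phi> :: "('a \<Rightarrow> real) \<Rightarrow> real^2" where "\<phi> x = (x a - x b) *\<^sub>R axis 1 1 + x c *\<^sub>R axis 2 1" for x
  have hom: "R homeomorphic sphere (0::real^3) 1" using tri triangulates_S2_def R_def by blast
  have opn: "open {x::'a\<Rightarrow>real. 0 < x s}"
    by (rule open_Collect_less) auto
  have Uo: "openin (top_of_set R) U" unfolding U_def using opn by (rule openin_open_Int)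
  have pU: "p \<in> U"
  proof -
    have "p \<in> R" unfolding R_def realization_def using sK by (auto simp: p_def intro!: bexI[of _ "{s}"])
    then show ?thesis by (simp add: U_def p_def)
  qed
  have contp: "continuous_on U \<phi>" unfolding \<phi>_def
    by (intro continuous_intros continuous_on_subset[OF continuous_on_product_coordinates]) auto
  have p0: "\<phi> p = 0" using d by (simp add: \<phi>_def p_def)
  have rep: "(\<forall>v. v \<notin> {s,a,b,c} \<longrightarrow> x v = 0) \<and> (\<forall>v. 0 \<le> x v) \<and> (x a = 0 \<or> x b = 0)
      \<and> x s + x a + x b + x c = 1" if xU: "x \<in> U" for x
  proof -
    obtain \<sigma> where \<sigma>: "\<sigma> \<in> K" "\<forall>v. v \<notin> \<sigma> \<longrightarrow> x v = 0" "\<forall>v. 0 \<le> x v" "sum x \<sigma> = 1"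
      using xU unfolding U_def R_def realization_def by blast
    have "s \<in> \<sigma>" using \<sigma>(2) xU unfolding U_def by force
    then have sub: "\<sigma> \<subseteq> {s,a,c} \<or> \<sigma> \<subseteq> {s,b,c}" using st \<sigma>(1) by blast
    then have sW: "\<sigma> \<subseteq> {s,a,b,c}" by blast
    have "sum x {s,a,b,c} = sum x \<sigma>"
      by (rule sum.mono_neutral_right) (use sW \<sigma>(2) in auto)
    then have "x s + x a + x b + x c = 1" using \<sigma>(4) d by (simp add: add.assoc)
    moreover have "x a = 0 \<or> x b = 0" using sub \<sigma>(2) d by blast
    ultimately show ?thesis using \<sigma>(2,3) sW by blast
  qed
  have injp: "inj_on \<phi> U"
  proof (rule inj_onI)
    fix x y assume xU: "x \<in> U" and yU: "y \<in> U" and e: "\<phi> x = \<phi> y"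
    have e1: "x a - x b = y a - y b" using arg_cong[OF e, of "\<lambda>z. z $ 1"] by (simp add: \<phi>_def axis_def)
    have e2: "x c = y c" using arg_cong[OF e, of "\<lambda>z. z $ 2"] by (simp add: \<phi>_def axis_def)
    note rx = rep[OF xU] and ry = rep[OF yU]
    have ea: "x a = y a" and eb: "x b = y b" using rx ry e1 by (smt (verit))+
    have es: "x s = y s" using rx ry ea eb e2 by linarith
    show "x = y"
    proof
      fix v
      show "x v = y v"
        using rx ry ea eb e2 es by (cases "v \<in> {s,a,b,c}") auto
    qed
  qed
  have pos: "\<phi> x $ 2 \<ge> 0" if "x \<in> U" for x
    using rep[OF that] by (simp add: \<phi>_def axis_def)
  show False
    by (rule L0_top[OF hom _ Uo pU contp injp p0 pos]) (simp add: U_def)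
qed

lemma vec3_eqI:
  fixes u v :: "real^3"
  assumes "u $ 1 = v $ 1" "u $ 2 = v $ 2" "u $ 3 = v $ 3"
  shows "u = v"
  using assms by (simp add: vec_eq_iff forall_3)

lemma TET:
  fixes K :: "'a set set"
  assumes tri: "triangulates_S2 K"
    and down: "\<And>\<sigma> \<tau>. \<sigma> \<in> K \<Longrightarrow> \<tau> \<noteq> {} \<Longrightarrow> \<tau> \<subseteq> \<sigma> \<Longrightarrow> \<tau> \<in> K"
    and d: "w0 \<noteq> w1" "w0 \<noteq> w2" "w0 \<noteq> w3" "w1 \<noteq> w2" "w1 \<noteq> w3" "w2 \<noteq> w3"
    and sub: "\<And>\<sigma>. \<sigma> \<noteq> {} \<Longrightarrow> \<sigma> \<subset> {w0,w1,w2,w3} \<Longrightarrow> \<sigma> \<in> K"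
  shows "K = {\<sigma>. \<sigma> \<noteq> {} \<and> \<sigma> \<subset> {w0,w1,w2,w3}}"
proof -
  define V where "V = {w0,w1,w2,w3}"
  define K' where "K' = {\<sigma>. \<sigma> \<noteq> {} \<and> \<sigma> \<subset> V}"
  define A0 :: "real^3 \<Rightarrow> real" where "A0 u = (u$1 + u$2 + u$3)/4" for u
  define A1 :: "real^3 \<Rightarrow> real" where "A1 u = (u$1 - u$2 - u$3)/4" for u
  define A2 :: "real^3 \<Rightarrow> real" where "A2 u = (- u$1 + u$2 - u$3)/4" for u
  define A3 :: "real^3 \<Rightarrow> real" where "A3 u = (- u$1 - u$2 + u$3)/4" for u
  define mn where "mn u = min (min (A0 u) (A1 u)) (min (A2 u) (A3 u))" for u
  define b where "b u v = (if v = w0 then A0 u - mn u else if v = w1 then A1 u - mn u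
      else if v = w2 then A2 u - mn u else A3 u - mn u)" for u v
  define p :: "'a \<Rightarrow> real^3" where "p v = (if v = w0 then vector [1,1,1] else if v = w1 then vector [1,-1,-1]
      else if v = w2 then vector [-1,1,-1] else vector [-1,-1,1])" for v
  have KK: "K' \<subseteq> K" using sub by (auto simp: K'_def V_def)
  have sumV: "(\<Sum>v\<in>V. f v) = f w0 + f w1 + f w2 + f w3" for f :: "'a \<Rightarrow> 'b::comm_monoid_add"
    using d by (simp add: V_def add.assoc)
  have mnneg: "mn u < 0" if u: "u \<in> sphere 0 1" for u
  proof (rule ccontr)
    assume "\<not> mn u < 0"
    then have "A0 u \<ge> 0" "A1 u \<ge> 0" "A2 u \<ge> 0" "A3 u \<ge> 0" by (auto simp: mn_def)
    then have "A0 u = 0" "A1 u = 0" "A2 u = 0" "A3 u = 0" by (auto simp: A0_def A1_def A2_def A3_def)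
    then have "u = 0" by (intro vec3_eqI) (auto simp: A0_def A1_def A2_def A3_def)
    then show False using u by simp
  qed
  have res: "\<forall>\<tau>\<in>K. \<exists>\<sigma>\<in>K'. \<tau> \<subseteq> \<sigma>"
  proof (rule GEN[OF tri down KK, where V = V and b = b and p = p])
    show "finite V" by (simp add: V_def)
    fix v assume "v \<in> V"
    have cA: "continuous_on UNIV A0" "continuous_on UNIV A1" "continuous_on UNIV A2" "continuous_on UNIV A3"
      unfolding A0_def A1_def A2_def A3_def by (auto intro!: continuous_intros)
    have cm: "continuous_on UNIV mn" unfolding mn_def by (intro continuous_intros cA)
    have c: "continuous_on (sphere 0 1) (\<lambda>u. A0 u - mn u)" "continuous_on (sphere 0 1) (\<lambda>u. A1 u - mn u)"
      "continuous_on (sphere 0 1) (\<lambda>u. A2 u - mn u)" "continuous_on (sphere 0 1) (\<lambda>u. A3 u - mn u)"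
      by (auto intro!: continuous_on_subset[OF continuous_on_diff[OF _ cm]] cA)
    show "continuous_on (sphere 0 1) (\<lambda>u. b u v)"
      unfolding b_def by (cases "v = w0"; cases "v = w1"; cases "v = w2") (simp_all add: c)
  next
    fix u :: "real^3" and v assume "u \<in> sphere 0 1" "v \<in> V"
    show "0 \<le> b u v" by (auto simp: b_def mn_def)
  next
    fix u :: "real^3" assume u: "u \<in> sphere 0 1"
    show "0 < (\<Sum>v\<in>V. b u v)"
      using mnneg[OF u] d by (simp add: sumV b_def A0_def A1_def A2_def A3_def field_simps)
  next
    fix u :: "real^3" assume u: "u \<in> sphere 0 1"
    show "(\<Sum>v\<in>V. b u v *\<^sub>R p v) = u"
      using d by (intro vec3_eqI) (simp_all add: sumV b_def p_def A0_def A1_def A2_def A3_def field_simps)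
  next
    fix u :: "real^3" assume u: "u \<in> sphere 0 1"
    have "mn u = A0 u \<or> mn u = A1 u \<or> mn u = A2 u \<or> mn u = A3 u" by (auto simp: mn_def min_def)
    then have "\<exists>w\<in>V. b u w = 0"
    proof (elim disjE)
      assume "mn u = A0 u" then show ?thesis using d by (intro bexI[of _ w0]) (auto simp: V_def b_def)
    next
      assume "mn u = A1 u" then show ?thesis using d by (intro bexI[of _ w1]) (auto simp: V_def b_def)
    next
      assume "mn u = A2 u" then show ?thesis using d by (intro bexI[of _ w2]) (auto simp: V_def b_def)
    next
      assume "mn u = A3 u" then show ?thesis using d by (intro bexI[of _ w3]) (auto simp: V_def b_def)
    qed
    then obtain w where w: "w \<in> V" "b u w = 0" by blast
    have "V - {w} \<in> K'" using w d by (auto simp: K'_def V_def)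
    moreover have "\<forall>v\<in>V - (V - {w}). b u v = 0" using w by auto
    ultimately show "\<exists>\<sigma>\<in>K'. \<sigma> \<subseteq> V \<and> (\<forall>v\<in>V - \<sigma>. b u v = 0)" by blast
  qed
  have "K \<subseteq> K'"
  proof
    fix \<tau> assume \<tau>: "\<tau> \<in> K"
    then obtain \<sigma> where "\<sigma> \<in> K'" "\<tau> \<subseteq> \<sigma>" using res by blast
    moreover have "\<tau> \<noteq> {}" using tri \<tau> unfolding triangulates_S2_def by blast
    ultimately show "\<tau> \<in> K'" by (auto simp: K'_def)
  qed
  with KK show ?thesis by (simp add: K'_def V_def)
qed

lemma SUS:
  fixes K :: "'a set set"
  assumes tri: "triangulates_S2 K"
    and down: "\<And>\<sigma> \<tau>. \<sigma> \<in> K \<Longrightarrow> \<tau> \<noteq> {} \<Longrightarrow> \<tau> \<subseteq> \<sigma> \<Longrightarrow> \<tau> \<in> K"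
    and d: "n \<noteq> sb" "n \<noteq> e0" "n \<noteq> e1" "n \<noteq> e2" "sb \<noteq> e0" "sb \<noteq> e1" "sb \<noteq> e2"
      "e0 \<noteq> e1" "e0 \<noteq> e2" "e1 \<noteq> e2"
    and tr: "\<And>t. t = n \<or> t = sb \<Longrightarrow> {t,e0,e1} \<in> K \<and> {t,e1,e2} \<in> K \<and> {t,e0,e2} \<in> K"
  shows "K = {\<sigma>. \<sigma> \<noteq> {} \<and> \<sigma> \<subseteq> {n,sb,e0,e1,e2} \<and> \<not> {n,sb} \<subseteq> \<sigma> \<and> \<not> {e0,e1,e2} \<subseteq> \<sigma>}"
proof -
  define V where "V = {n,sb,e0,e1,e2}"
  define K' where "K' = {\<sigma>. \<sigma> \<noteq> {} \<and> \<sigma> \<subseteq> V \<and> \<not> {n,sb} \<subseteq> \<sigma> \<and> \<not> {e0,e1,e2} \<subseteq> \<sigma>}"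
  define P :: "real^3 \<Rightarrow> real" where "P u = u$3/2" for u
  define Q :: "real^3 \<Rightarrow> real" where "Q u = - u$3/2" for u
  define E0 :: "real^3 \<Rightarrow> real" where "E0 u = u$1/3" for u
  define E1 :: "real^3 \<Rightarrow> real" where "E1 u = - u$1/6 + u$2/2" for u
  define E2 :: "real^3 \<Rightarrow> real" where "E2 u = - u$1/6 - u$2/2" for u
  define mp where "mp u = min (P u) (Q u)" for u
  define me where "me u = min (min (E0 u) (E1 u)) (E2 u)" for u
  define b where "b u v = (if v = n then P u - mp u else if v = sb then Q u - mp u
      else if v = e0 then E0 u - me u else if v = e1 then E1 u - me u else E2 u - me u)" for u v
  define p :: "'a \<Rightarrow> real^3" where "p v = (if v = n then vector [0,0,1] else if v = sb then vector [0,0,-1]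
      else if v = e0 then vector [2,0,0] else if v = e1 then vector [-1,1,0] else vector [-1,-1,0])" for v
  have KK: "K' \<subseteq> K"
  proof
    fix \<sigma> assume "\<sigma> \<in> K'"
    then have \<sigma>: "\<sigma> \<noteq> {}" "\<sigma> \<subseteq> V" "\<not> {n,sb} \<subseteq> \<sigma>" "\<not> {e0,e1,e2} \<subseteq> \<sigma>" by (auto simp: K'_def)
    obtain t where t: "t = n \<or> t = sb" "\<sigma> \<inter> {n,sb} \<subseteq> {t}" using \<sigma>(3) by blast
    have "\<exists>T\<in>{{t,e0,e1},{t,e1,e2},{t,e0,e2}}. \<sigma> \<subseteq> T"
      using \<sigma>(2,4) t(2) by (auto simp: V_def)
    then show "\<sigma> \<in> K" using tr[OF t(1)] down \<sigma>(1) by blast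
  qed
  have sumV: "(\<Sum>v\<in>V. f v) = f n + f sb + f e0 + f e1 + f e2" for f :: "'a \<Rightarrow> 'b::comm_monoid_add"
    using d by (simp add: V_def add.assoc)
  have neg: "mp u < 0 \<or> me u < 0" if u: "u \<in> sphere 0 1" for u
  proof (rule ccontr)
    assume "\<not> (mp u < 0 \<or> me u < 0)"
    then have "P u \<ge> 0" "Q u \<ge> 0" "E0 u \<ge> 0" "E1 u \<ge> 0" "E2 u \<ge> 0" by (auto simp: mp_def me_def)
    then have "u $ 3 = 0" "u $ 1 = 0" "u $ 2 = 0" by (auto simp: P_def Q_def E0_def E1_def E2_def)
    then have "u = 0" by (intro vec3_eqI) auto
    then show False using u by simp
  qed
  have res: "\<forall>\<tau>\<in>K. \<exists>\<sigma>\<in>K'. \<tau> \<subseteq> \<sigma>"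
  proof (rule GEN[OF tri down KK, where V = V and b = b and p = p])
    show "finite V" by (simp add: V_def)
    fix v assume "v \<in> V"
    have cA: "continuous_on UNIV P" "continuous_on UNIV Q" "continuous_on UNIV E0" "continuous_on UNIV E1"
      "continuous_on UNIV E2"
      unfolding P_def Q_def E0_def E1_def E2_def by (auto intro!: continuous_intros)
    have cm: "continuous_on UNIV mp" "continuous_on UNIV me" unfolding mp_def me_def by (auto intro!: continuous_intros cA)
    have c: "continuous_on (sphere 0 1) (\<lambda>u. P u - mp u)" "continuous_on (sphere 0 1) (\<lambda>u. Q u - mp u)"
      "continuous_on (sphere 0 1) (\<lambda>u. E0 u - me u)" "continuous_on (sphere 0 1) (\<lambda>u. E1 u - me u)"
      "continuous_on (sphere 0 1) (\<lambda>u. E2 u - me u)"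
      by (auto intro!: continuous_on_subset[OF continuous_on_diff] cA cm)
    show "continuous_on (sphere 0 1) (\<lambda>u. b u v)"
      unfolding b_def by (cases "v = n"; cases "v = sb"; cases "v = e0"; cases "v = e1") (simp_all add: c)
  next
    fix u :: "real^3" and v assume "u \<in> sphere 0 1" "v \<in> V"
    show "0 \<le> b u v" by (auto simp: b_def mp_def me_def)
  next
    fix u :: "real^3" assume u: "u \<in> sphere 0 1"
    have "mp u \<le> 0" "me u \<le> 0" by (auto simp: mp_def me_def P_def Q_def E0_def E1_def E2_def min_def)
    then show "0 < (\<Sum>v\<in>V. b u v)"
      using neg[OF u] d by (simp add: sumV b_def P_def Q_def E0_def E1_def E2_def field_simps; linarith)
  next
    fix u :: "real^3" assume u: "u \<in> sphere 0 1"
    show "(\<Sum>v\<in>V. b u v *\<^sub>R p v) = u"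
      using d by (intro vec3_eqI) (simp_all add: sumV b_def p_def P_def Q_def E0_def E1_def E2_def field_simps)
  next
    fix u :: "real^3" assume u: "u \<in> sphere 0 1"
    have "\<exists>t. (t = n \<or> t = sb) \<and> (\<forall>t'. (t' = n \<or> t' = sb) \<and> t' \<noteq> t \<longrightarrow> b u t' = 0)"
    proof (cases "mp u = P u")
      case True then show ?thesis using d by (intro exI[of _ sb]) (auto simp: b_def)
    next
      case False then have "mp u = Q u" by (auto simp: mp_def min_def)
      then show ?thesis using d by (intro exI[of _ n]) (auto simp: b_def)
    qed
    then obtain t where t: "t = n \<or> t = sb" "\<And>t'. (t' = n \<or> t' = sb) \<Longrightarrow> t' \<noteq> t \<Longrightarrow> b u t' = 0" by blast
    have "me u = E0 u \<or> me u = E1 u \<or> me u = E2 u" by (auto simp: me_def min_def)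
    then have "\<exists>w. (w = e0 \<or> w = e1 \<or> w = e2) \<and> b u w = 0"
    proof (elim disjE)
      assume "me u = E0 u" then show ?thesis using d by (intro exI[of _ e0]) (auto simp: b_def)
    next
      assume "me u = E1 u" then show ?thesis using d by (intro exI[of _ e1]) (auto simp: b_def)
    next
      assume "me u = E2 u" then show ?thesis using d by (intro exI[of _ e2]) (auto simp: b_def)
    qed
    then obtain w where w: "w = e0 \<or> w = e1 \<or> w = e2" "b u w = 0" by blast
    define \<sigma> where "\<sigma> = insert t ({e0,e1,e2} - {w})"
    have "\<sigma> \<in> K'" using t(1) w(1) d by (auto simp: K'_def V_def \<sigma>_def)
    moreover have "\<sigma> \<subseteq> V" using t(1) by (auto simp: V_def \<sigma>_def)
    moreover have "\<forall>v\<in>V-\<sigma>. b u v = 0" using t w by (auto simp: V_def \<sigma>_def)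
    ultimately show "\<exists>\<sigma>\<in>K'. \<sigma> \<subseteq> V \<and> (\<forall>v\<in>V - \<sigma>. b u v = 0)" by blast
  qed
  have "K \<subseteq> K'"
  proof
    fix \<tau> assume \<tau>: "\<tau> \<in> K"
    then obtain \<sigma> where "\<sigma> \<in> K'" "\<tau> \<subseteq> \<sigma>" using res by blast
    moreover have "\<tau> \<noteq> {}" using tri \<tau> unfolding triangulates_S2_def by blast
    ultimately show "\<tau> \<in> K'" by (auto simp: K'_def)
  qed
  with KK show ?thesis by (simp add: K'_def V_def)
qed

lemma nerve_down:
  assumes "T \<in> nerve S m" "T' \<noteq> {}" "T' \<subseteq> T"
  shows "T' \<in> nerve S m"
proof -
  have "special_subgroup S m T' \<subseteq> special_subgroup S m T"
    unfolding special_subgroup_def using assms(3) by (auto intro!: image_mono lists_mono)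
  then show ?thesis using assms unfolding nerve_def by (auto intro: finite_subset)
qed

lemma cox_cong_inst:
  assumes "cox_eq S m x y" "a = u @ x @ v" "b = u @ y @ v"
  shows "cox_eq S m a b"
  using cox_eq.cong[OF assms(1), of u v] assms(2,3) by simp

lemma cox_commute:
  assumes "s \<in> S" "t \<in> S" "m s t = 2"
  shows "cox_eq S m [t, s] [s, t]"
proof -
  have br: "cox_eq S m [s,t,s,t] []"
    using cox_eq.braid[where m=m, OF assms(1,2)] assms(3) by (simp add: alt_word_def numeral_2_eq_2)
  have 1: "cox_eq S m [s,t,s,t,t,s] [t,s]"
    by (rule cox_cong_inst[OF br, of _ "[]" "[t,s]"]) auto
  have 2: "cox_eq S m [s,t,s,t,t,s] [s,t,s,s]"
    by (rule cox_cong_inst[OF cox_eq.invol[OF assms(2)], of _ "[s,t,s]" "[s]"]) auto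
  have 3: "cox_eq S m [s,t,s,s] [s,t]"
    by (rule cox_cong_inst[OF cox_eq.invol[OF assms(1)], of _ "[s,t]" "[]"]) auto
  show ?thesis
    by (rule cox_eq.trans[OF cox_eq.sym[OF 1] cox_eq.trans[OF 2 3]])
qed

lemma cox_elem_eq:
  assumes "cox_eq S m w w'"
  shows "cox_elem S m w = cox_elem S m w'"
  unfolding cox_elem_def using assms by (auto intro: cox_eq.trans cox_eq.sym)

lemma normal_form:
  assumes c: "c \<in> S" and ac: "cox_eq S m [a, c] [c, a]" and bc: "cox_eq S m [b, c] [c, b]"
  shows "w \<in> lists {a,b,c} \<Longrightarrow> \<exists>w'\<in>lists {a,b}. cox_eq S m w w' \<or> cox_eq S m w (c # w')"
proof (induction w)
  case Nil
  then show ?case by (auto intro: cox_eq.refl)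
next
  case (Cons x w)
  then obtain w' where w': "w' \<in> lists {a,b}" "cox_eq S m w w' \<or> cox_eq S m w (c # w')" by auto
  have xin: "x = a \<or> x = b \<or> x = c" using Cons.prems by auto
  have cg: "cox_eq S m (x # w) (x # u)" if "cox_eq S m w u" for u
    by (rule cox_cong_inst[OF that, of _ "[x]" "[]"]) auto
  show ?case
  proof (cases "x = c")
    case True
    show ?thesis
    proof (cases "cox_eq S m w w'")
      case True
      then show ?thesis using cg \<open>x = c\<close> w'(1) by blast
    next
      case False
      then have "cox_eq S m w (c # w')" using w' by blast
      then have "cox_eq S m (x # w) (c # c # w')" using cg \<open>x = c\<close> by blast
      moreover have "cox_eq S m (c # c # w') w'"
        by (rule cox_cong_inst[OF cox_eq.invol[OF c], of _ "[]" w']) auto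
      ultimately show ?thesis using \<open>x = c\<close> w'(1) cox_eq.trans by blast
    qed
  next
    case False
    then have xab: "x = a \<or> x = b" using xin by blast
    then have xc: "cox_eq S m [x, c] [c, x]" using ac bc by blast
    show ?thesis
    proof (cases "cox_eq S m w w'")
      case True
      then have "cox_eq S m (x # w) (x # w')" using cg by blast
      moreover have "x # w' \<in> lists {a,b}" using xab w'(1) by auto
      ultimately show ?thesis by blast
    next
      case False
      then have "cox_eq S m w (c # w')" using w' by blast
      then have "cox_eq S m (x # w) (x # c # w')" using cg by blast
      moreover have "cox_eq S m (x # c # w') (c # x # w')"
        by (rule cox_cong_inst[OF xc, of _ "[]" w']) auto
      moreover have "x # w' \<in> lists {a,b}" using xab w'(1) by auto
      ultimately show ?thesis using cox_eq.trans by blast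
    qed
  qed
qed

lemma nerve_add_commuting:
  assumes cm: "coxeter_matrix S m" and ab: "{a,b} \<in> nerve S m" and c: "c \<in> S"
    and mac: "m a c = 2" and mbc: "m b c = 2"
  shows "{a,b,c} \<in> nerve S m"
proof -
  have abS: "a \<in> S" "b \<in> S" using ab unfolding nerve_def by auto
  have ac: "cox_eq S m [a, c] [c, a]" using cox_commute[where m=m, OF abS(1) c mac] by (rule cox_eq.sym)
  have bc: "cox_eq S m [b, c] [c, b]" using cox_commute[where m=m, OF abS(2) c mbc] by (rule cox_eq.sym)
  define A where "A = special_subgroup S m {a,b}"
  define G where "G E = {v. \<exists>u\<in>E. cox_eq S m (c # u) v}" for E
  have finA: "finite A" using ab unfolding nerve_def A_def by auto
  have Gc: "G (cox_elem S m w) = cox_elem S m (c # w)" for w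
  proof
    show "G (cox_elem S m w) \<subseteq> cox_elem S m (c # w)"
    proof
      fix v assume "v \<in> G (cox_elem S m w)"
      then obtain u where u: "cox_eq S m w u" "cox_eq S m (c # u) v" by (auto simp: G_def cox_elem_def)
      have "cox_eq S m (c # w) (c # u)" by (rule cox_cong_inst[OF u(1), of _ "[c]" "[]"]) auto
      then show "v \<in> cox_elem S m (c # w)" using u(2) cox_eq.trans by (auto simp: cox_elem_def)
    qed
    show "cox_elem S m (c # w) \<subseteq> G (cox_elem S m w)"
      by (auto simp: G_def cox_elem_def intro: cox_eq.refl)
  qed
  have "special_subgroup S m {a,b,c} \<subseteq> A \<union> G ` A"
  proof
    fix E assume "E \<in> special_subgroup S m {a,b,c}"
    then obtain w where w: "w \<in> lists {a,b,c}" "E = cox_elem S m w" by (auto simp: special_subgroup_def)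
    obtain w' where w': "w' \<in> lists {a,b}" "cox_eq S m w w' \<or> cox_eq S m w (c # w')"
      using normal_form[OF c ac bc w(1)] by blast
    have inA: "cox_elem S m w' \<in> A" using w'(1) by (auto simp: A_def special_subgroup_def)
    show "E \<in> A \<union> G ` A"
    proof (cases "cox_eq S m w w'")
      case True
      then have "E = cox_elem S m w'" using w(2) cox_elem_eq by blast
      then show ?thesis using inA by blast
    next
      case False
      then have "E = cox_elem S m (c # w')" using w' w(2) cox_elem_eq by blast
      moreover have "G (cox_elem S m w') \<in> G ` A" using inA by blast
      ultimately show ?thesis using Gc by simp
    qed
  qed
  then have "finite (special_subgroup S m {a,b,c})" using finA by (meson finite_UnI finite_imageI finite_subset)
  then show ?thesis using abS c unfolding nerve_def by auto
qed

lemma starsub: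
  assumes dc: "\<forall>\<sigma>\<in>K. \<forall>\<tau>. \<tau> \<noteq> {} \<and> \<tau> \<subseteq> \<sigma> \<longrightarrow> \<tau> \<in> K"
    and "\<sigma> \<in> K" "s \<in> \<sigma>"
  shows "\<sigma> \<subseteq> insert s (verts (link K s))"
proof
  fix v assume v: "v \<in> \<sigma>"
  show "v \<in> insert s (verts (link K s))"
  proof (cases "v = s")
    case False
    have "{v} \<in> K" using dc assms(2) v by blast
    then have "{v} \<in> link K s" unfolding link_def using assms(2,3) v False by blast
    then show ?thesis unfolding verts_def by blast
  qed simp
qed

lemma s_notin_link: "s \<notin> verts (link K s)"
  unfolding verts_def link_def by blast

lemma link_mem:
  assumes "\<tau> \<in> K" "\<sigma> \<in> K" "s \<in> \<sigma>" "\<tau> \<subseteq> \<sigma>" "s \<notin> \<tau>"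
  shows "\<tau> \<in> link K s"
  using assms unfolding link_def by blast

lemma full_from:
  assumes dc: "\<forall>\<sigma>\<in>K. \<forall>\<tau>. \<tau> \<noteq> {} \<and> \<tau> \<subseteq> \<sigma> \<longrightarrow> \<tau> \<in> K"
    and lf: "\<And>\<sigma>. \<sigma> \<in> K \<Longrightarrow> \<sigma> \<subseteq> verts (link K s) \<Longrightarrow> \<sigma> \<in> link K s"
  shows "full_subcomplex K (link K s) \<and> full_subcomplex K (star K s)"
proof
  show "full_subcomplex K (link K s)" unfolding full_subcomplex_def using lf by (auto simp: link_def)
  have vs: "verts (star K s) \<subseteq> insert s (verts (link K s))"
  proof
    fix v assume "v \<in> verts (star K s)"
    then obtain \<tau> \<sigma> where "\<tau> \<in> K" "\<sigma> \<in> K" "s \<in> \<sigma>" "\<tau> \<subseteq> \<sigma>" "v \<in> \<tau>"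
      unfolding verts_def star_def by blast
    then show "v \<in> insert s (verts (link K s))" using starsub[OF dc] by blast
  qed
  have ls: "link K s \<subseteq> star K s" unfolding link_def star_def by blast
  show "full_subcomplex K (star K s)"
    unfolding full_subcomplex_def
  proof (intro conjI ballI impI)
    show "star K s \<subseteq> K" unfolding star_def by blast
    fix \<sigma> assume \<sigma>: "\<sigma> \<in> K" "\<sigma> \<subseteq> verts (star K s)"
    show "\<sigma> \<in> star K s"
    proof (cases "s \<in> \<sigma>")
      case True
      then show ?thesis using \<sigma>(1) unfolding star_def by blast
    next
      case False
      then have "\<sigma> \<subseteq> verts (link K s)" using \<sigma>(2) vs by blast
      then show ?thesis using lf \<sigma>(1) ls by blast
    qed
  qed
qed

lemma TRI3:
  assumes tri: "triangulates_S2 K"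
    and down: "\<And>\<sigma> \<tau>. \<sigma> \<in> K \<Longrightarrow> \<tau> \<noteq> {} \<Longrightarrow> \<tau> \<subseteq> \<sigma> \<Longrightarrow> \<tau> \<in> K"
    and sK: "{s} \<in> K" and vl: "verts (link K s) = {a,b,c}"
    and d: "a \<noteq> b" "a \<noteq> c" "b \<noteq> c" "s \<noteq> a" "s \<noteq> b" "s \<noteq> c"
  shows "{s,a,b} \<in> K"
proof (rule ccontr)
  assume nab: "{s,a,b} \<notin> K"
  show False
  proof (rule VL3[OF tri sK d])
    fix \<sigma> assume \<sigma>: "\<sigma> \<in> K" "s \<in> \<sigma>"
    have dc: "\<forall>\<sigma>\<in>K. \<forall>\<tau>. \<tau> \<noteq> {} \<and> \<tau> \<subseteq> \<sigma> \<longrightarrow> \<tau> \<in> K" using down by blast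
    have sub: "\<sigma> \<subseteq> {s,a,b,c}" using starsub[OF dc \<sigma>] vl by simp
    have "\<not> (a \<in> \<sigma> \<and> b \<in> \<sigma>)"
    proof
      assume "a \<in> \<sigma> \<and> b \<in> \<sigma>"
      then have "{s,a,b} \<subseteq> \<sigma>" using \<sigma>(2) by blast
      then have "{s,a,b} \<in> K" by (intro down[OF \<sigma>(1)]) auto
      then show False using nab by contradiction
    qed
    then have "a \<notin> \<sigma> \<or> b \<notin> \<sigma>" by blast
    then show "\<sigma> \<subseteq> {s,a,c} \<or> \<sigma> \<subseteq> {s,b,c}"
    proof
      assume "a \<notin> \<sigma>" then have "\<sigma> \<subseteq> {s,b,c}" using sub by auto
      then show ?thesis by blast
    next
      assume "b \<notin> \<sigma>" then have "\<sigma> \<subseteq> {s,a,c}" using sub by auto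
      then show ?thesis by blast
    qed
  qed
qed

lemma card3_distinct: "card {x,y,z} = 3 \<Longrightarrow> x \<noteq> y \<and> x \<noteq> z \<and> y \<noteq> z"
  by (auto simp: card_insert_if split: if_splits)

lemma susp_eq:
  assumes d: "n \<noteq> sb" "n \<noteq> e0" "n \<noteq> e1" "n \<noteq> e2" "sb \<noteq> e0" "sb \<noteq> e1" "sb \<noteq> e2"
      "e0 \<noteq> e1" "e0 \<noteq> e2" "e1 \<noteq> e2"
  shows "{\<sigma>. \<sigma> \<noteq> {} \<and> \<sigma> \<subseteq> {n,sb,e0,e1,e2} \<and> \<not> {n,sb} \<subseteq> \<sigma> \<and> \<not> {e0,e1,e2} \<subseteq> \<sigma>}
    = suspension n sb {{e0},{e1},{e2},{e0,e1},{e1,e2},{e2,e0}}"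
proof
  show "suspension n sb {{e0},{e1},{e2},{e0,e1},{e1,e2},{e2,e0}} \<subseteq> {\<sigma>. \<sigma> \<noteq> {} \<and> \<sigma> \<subseteq> {n,sb,e0,e1,e2} \<and> \<not> {n,sb} \<subseteq> \<sigma> \<and> \<not> {e0,e1,e2} \<subseteq> \<sigma>}"
    using d unfolding suspension_def by auto
next
  show "{\<sigma>. \<sigma> \<noteq> {} \<and> \<sigma> \<subseteq> {n,sb,e0,e1,e2} \<and> \<not> {n,sb} \<subseteq> \<sigma> \<and> \<not> {e0,e1,e2} \<subseteq> \<sigma>} \<subseteq> suspension n sb {{e0},{e1},{e2},{e0,e1},{e1,e2},{e2,e0}}"
  proof
    fix \<sigma> assume "\<sigma> \<in> {\<sigma>. \<sigma> \<noteq> {} \<and> \<sigma> \<subseteq> {n,sb,e0,e1,e2} \<and> \<not> {n,sb} \<subseteq> \<sigma> \<and> \<not> {e0,e1,e2} \<subseteq> \<sigma>}"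
    then have \<sigma>: "\<sigma> \<noteq> {}" "\<sigma> \<subseteq> {n,sb,e0,e1,e2}" "\<not> {n,sb} \<subseteq> \<sigma>" "\<not> {e0,e1,e2} \<subseteq> \<sigma>" by auto
    define P where "P = \<sigma> \<inter> {n,sb}"
    define E where "E = \<sigma> \<inter> {e0,e1,e2}"
    have un: "\<sigma> = P \<union> E" using \<sigma>(2) by (auto simp: P_def E_def)
    have P: "P \<in> {{}, {n}, {sb}}" using \<sigma>(3) by (auto simp: P_def)
    have E: "E \<in> insert {} {{e0},{e1},{e2},{e0,e1},{e1,e2},{e2,e0}}"
      using \<sigma>(4) by (cases "e0 \<in> \<sigma>"; cases "e1 \<in> \<sigma>"; cases "e2 \<in> \<sigma>") (auto simp: E_def)
    show "\<sigma> \<in> suspension n sb {{e0},{e1},{e2},{e0,e1},{e1,e2},{e2,e0}}"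
      unfolding suspension_def using un P E \<sigma>(1) by blast
  qed
qed

lemma cycle_complex_img:
  "cycle_complex n c = (\<lambda>i. {c i}) ` {..<n} \<union> (\<lambda>i. {c i, c ((i+1) mod n)}) ` {..<n}"
  unfolding cycle_complex_def by blast
lemma cycle3:
  "cycle_complex 3 (\<lambda>i::nat. if i = 0 then x else if i = 1 then y else z) = {{x},{y},{z},{x,y},{y,z},{z,x}}"
proof -
  have l3: "{..<3::nat} = {0,1,2}" by auto
  show ?thesis unfolding cycle_complex_img l3 by (simp add: insert_commute)
qed

lemma DIAG:
  assumes cm: "coxeter_matrix S m" and tri: "triangulates_S2 (nerve S m)"
    and d: "s \<noteq> a0" "s \<noteq> a1" "s \<noteq> a2" "s \<noteq> a3" "a0 \<noteq> a1" "a0 \<noteq> a2" "a0 \<noteq> a3" "a1 \<noteq> a2" "a1 \<noteq> a3" "a2 \<noteq> a3"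
    and inS: "a0 \<in> S" "a1 \<in> S" "a2 \<in> S" "a3 \<in> S"
    and t: "{s,a0,a1} \<in> nerve S m" "{s,a1,a2} \<in> nerve S m" "{s,a2,a3} \<in> nerve S m" "{s,a3,a0} \<in> nerve S m"
    and mm: "m a0 a1 = 2" "m a1 a2 = 2" "m a2 a3 = 2" "m a3 a0 = 2"
    and diag: "{a0,a2} \<in> nerve S m"
  shows "suspension_of_ngon (nerve S m) 3"
proof -
  let ?K = "nerve S m"
  have sym: "m x y = m y x" if "x \<in> S" "y \<in> S" for x y using cm that unfolding coxeter_matrix_def by blast
  have down: "\<And>\<sigma> \<tau>. \<sigma> \<in> ?K \<Longrightarrow> \<tau> \<noteq> {} \<Longrightarrow> \<tau> \<subseteq> \<sigma> \<Longrightarrow> \<tau> \<in> ?K" using nerve_down by blast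
  have T1: "{a0,a2,a1} \<in> ?K"
    by (rule nerve_add_commuting[OF cm diag inS(2)]) (use mm sym[OF inS(3) inS(2)] in auto)
  have T2: "{a0,a2,a3} \<in> ?K"
    by (rule nerve_add_commuting[OF cm diag inS(4)]) (use mm sym[OF inS(1) inS(4)] in auto)
  have KK: "?K = {\<sigma>. \<sigma> \<noteq> {} \<and> \<sigma> \<subseteq> {a1,a3,s,a0,a2} \<and> \<not> {a1,a3} \<subseteq> \<sigma> \<and> \<not> {s,a0,a2} \<subseteq> \<sigma>}"
  proof (rule SUS[OF tri down])
    fix tt assume "tt = a1 \<or> tt = a3"
    then show "{tt,s,a0} \<in> ?K \<and> {tt,a0,a2} \<in> ?K \<and> {tt,s,a2} \<in> ?K"
    proof
      assume "tt = a1" then show ?thesis using t T1 by (simp add: insert_commute)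
    next
      assume "tt = a3" then show ?thesis using t T2 by (simp add: insert_commute)
    qed
  qed (use d in auto)
  define cc where "cc = (\<lambda>i::nat. if i = 0 then s else if i = 1 then a0 else a2)"
  have l3: "{..<3::nat} = {0,1,2}" by auto
  have img: "cc ` {..<3} = {s,a0,a2}" by (auto simp: l3 cc_def)
  have inj: "inj_on cc {..<3}" using d by (auto simp: l3 cc_def inj_on_def)
  have cyc: "cycle_complex 3 cc = {{s},{a0},{a2},{s,a0},{a0,a2},{a2,s}}" unfolding cc_def by (rule cycle3)
  have f1: "?K = suspension a1 a3 (cycle_complex 3 cc)"
    unfolding KK cyc by (rule susp_eq) (use d in auto)
  have f2: "is_cycle (cycle_complex 3 cc) 3 cc" using inj by (simp add: is_cycle_def)
  have f3: "a1 \<noteq> a3" "a1 \<notin> cc ` {..<3}" "a3 \<notin> cc ` {..<3}" using d img by auto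
  show ?thesis unfolding suspension_of_ngon_def
  proof (rule exI[of _ a1], rule exI[of _ a3], rule exI[of _ cc])
    show "a1 \<noteq> a3 \<and> a1 \<notin> cc ` {..<3} \<and> a3 \<notin> cc ` {..<3} \<and> is_cycle (cycle_complex 3 cc) 3 cc \<and>
      ?K = suspension a1 a3 (cycle_complex 3 cc)"
      by (simp only: f1 f2 f3 simp_thms)
  qed
qed

theorem mainTheorem3:
  fixes S :: "'a set" and m :: "'a \<Rightarrow> 'a \<Rightarrow> nat" and s :: 'a
  assumes "coxeter_matrix S m"
    and "triangulates_S2 (nerve S m)"
    and "\<not> boundary_of_3simplex (nerve S m)"
    and "s \<in> S"
  shows "(three_euclidean (nerve S m) m s \<longrightarrow>
            full_subcomplex (nerve S m) (link (nerve S m) s) \<and>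
            full_subcomplex (nerve S m) (star (nerve S m) s))
       \<and> (four_euclidean (nerve S m) m s \<and> \<not> suspension_of_ngon (nerve S m) 3 \<longrightarrow>
            full_subcomplex (nerve S m) (link (nerve S m) s) \<and>
            full_subcomplex (nerve S m) (star (nerve S m) s))"
proof -
  let ?K = "nerve S m"
  note cm = assms(1) and tri = assms(2) and nb = assms(3)
  have down: "\<And>\<sigma> \<tau>. \<sigma> \<in> ?K \<Longrightarrow> \<tau> \<noteq> {} \<Longrightarrow> \<tau> \<subseteq> \<sigma> \<Longrightarrow> \<tau> \<in> ?K" using nerve_down by blast
  have dc: "\<forall>\<sigma>\<in>?K. \<forall>\<tau>. \<tau> \<noteq> {} \<and> \<tau> \<subseteq> \<sigma> \<longrightarrow> \<tau> \<in> ?K" using nerve_down by blast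
  have vS: "verts (link ?K s) \<subseteq> S" unfolding verts_def link_def nerve_def by blast
  have sK: "{s} \<in> ?K" if vv: "v \<in> verts (link ?K s)" for v
  proof -
    obtain \<tau> where "\<tau> \<in> link ?K s" "v \<in> \<tau>" using vv unfolding verts_def by blast
    then obtain \<sigma> where "\<sigma> \<in> ?K" "s \<in> \<sigma>" unfolding link_def by blast
    then show ?thesis using down[of \<sigma> "{s}"] by blast
  qed
  have sn: "s \<notin> verts (link ?K s)" by (rule s_notin_link)
  show ?thesis
  proof (intro conjI impI)
    assume "three_euclidean ?K m s"
    then obtain s0 s1 s2 where v3: "valence ?K s = 3" and vl: "verts (link ?K s) = {s0,s1,s2}"
      unfolding three_euclidean_def by blast
    have c3: "card {s0,s1,s2} = 3" using v3 unfolding valence_def vl .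
    have d: "s0 \<noteq> s1" "s0 \<noteq> s2" "s1 \<noteq> s2" using card3_distinct[OF c3] by simp_all
    have sn': "s \<notin> {s0,s1,s2}" using sn unfolding vl .
    have ds: "s \<noteq> s0" "s \<noteq> s1" "s \<noteq> s2" using sn' by simp_all
    have "s0 \<in> verts (link ?K s)" using vl by simp
    then have sK': "{s} \<in> ?K" by (rule sK)
    have t01: "{s,s0,s1} \<in> ?K" using d ds by (intro TRI3[OF tri down sK' vl]) simp_all
    have vl2: "verts (link ?K s) = {s1,s2,s0}" using vl by auto
    have t12: "{s,s1,s2} \<in> ?K" using d ds by (intro TRI3[OF tri down sK' vl2]) simp_all
    have vl3: "verts (link ?K s) = {s0,s2,s1}" using vl by auto
    have t02: "{s,s0,s2} \<in> ?K" using d ds by (intro TRI3[OF tri down sK' vl3]) simp_all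
    have lf: "\<sigma> \<in> link ?K s" if \<sigma>: "\<sigma> \<in> ?K" "\<sigma> \<subseteq> verts (link ?K s)" for \<sigma>
    proof (cases "\<sigma> = {s0,s1,s2}")
      case True
      have "?K = {\<sigma>. \<sigma> \<noteq> {} \<and> \<sigma> \<subset> {s,s0,s1,s2}}"
      proof (rule TET[OF tri down])
        fix \<tau> assume \<tau>: "\<tau> \<noteq> {}" "\<tau> \<subset> {s,s0,s1,s2}"
        then obtain x where x: "x \<in> {s,s0,s1,s2}" "x \<notin> \<tau>" by blast
        have "x = s \<or> x = s0 \<or> x = s1 \<or> x = s2" using x(1) by simp
        then show "\<tau> \<in> ?K"
        proof (elim disjE)
          assume "x = s" then have "\<tau> \<subseteq> \<sigma>" using \<tau>(2) x(2) True by auto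
          then show ?thesis by (rule down[OF \<sigma>(1) \<tau>(1)])
        next
          assume "x = s0" then have "\<tau> \<subseteq> {s,s1,s2}" using \<tau>(2) x(2) by auto
          then show ?thesis by (rule down[OF t12 \<tau>(1)])
        next
          assume "x = s1" then have "\<tau> \<subseteq> {s,s0,s2}" using \<tau>(2) x(2) by auto
          then show ?thesis by (rule down[OF t02 \<tau>(1)])
        next
          assume "x = s2" then have "\<tau> \<subseteq> {s,s0,s1}" using \<tau>(2) x(2) by auto
          then show ?thesis by (rule down[OF t01 \<tau>(1)])
        qed
      qed (use d ds in auto)
      moreover have "card {s,s0,s1,s2} = 4" using d ds by simp
      ultimately have "boundary_of_3simplex ?K" unfolding boundary_of_3simplex_def by (intro exI[of _ "{s,s0,s1,s2}"]) simp
      then show ?thesis using nb by contradiction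
    next
      case False
      have sub: "\<sigma> \<subseteq> {s0,s1,s2}" using \<sigma>(2) vl by simp
      then obtain x where x: "x \<in> {s0,s1,s2}" "x \<notin> \<sigma>" using False by blast
      have ns: "s \<notin> \<sigma>" using \<sigma>(2) sn by blast
      have "x = s0 \<or> x = s1 \<or> x = s2" using x(1) by simp
      then show ?thesis
      proof (elim disjE)
        assume "x = s0" then have "\<sigma> \<subseteq> {s,s1,s2}" using sub x(2) by auto
        then show ?thesis using link_mem[OF \<sigma>(1) t12 _ _ ns] by simp
      next
        assume "x = s1" then have "\<sigma> \<subseteq> {s,s0,s2}" using sub x(2) by auto
        then show ?thesis using link_mem[OF \<sigma>(1) t02 _ _ ns] by simp
      next
        assume "x = s2" then have "\<sigma> \<subseteq> {s,s0,s1}" using sub x(2) by auto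
        then show ?thesis using link_mem[OF \<sigma>(1) t01 _ _ ns] by simp
      qed
    qed
    show "full_subcomplex ?K (link ?K s)" using full_from[OF dc] lf by blast
    show "full_subcomplex ?K (star ?K s)" using full_from[OF dc] lf by blast
  next
    assume fe: "four_euclidean ?K m s \<and> \<not> suspension_of_ngon ?K 3"
    then obtain c where cyc: "is_cycle (link ?K s) 4 c" and mc: "\<forall>i<4. m (c i) (c ((i + 1) mod 4)) = 2"
      unfolding four_euclidean_def by blast
    have ns: "\<not> suspension_of_ngon ?K 3" using fe by blast
    have inj: "inj_on c {..<4}" and lk: "link ?K s = cycle_complex 4 c" using cyc unfolding is_cycle_def by auto
    have dd: "c i \<noteq> c j" if "i < 4" "j < 4" "i \<noteq> j" for i j
      using inj_onD[OF inj _ _] that by blast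
    have d: "c 0 \<noteq> c 1" "c 0 \<noteq> c 2" "c 0 \<noteq> c 3" "c 1 \<noteq> c 2" "c 1 \<noteq> c 3" "c 2 \<noteq> c 3"
      by (rule dd; simp)+
    have edge: "{c i, c ((i+1) mod 4)} \<in> link ?K s" if "i < 4" for i
      unfolding lk cycle_complex_def using that by blast
    have vin: "c i \<in> verts (link ?K s)" if "i < 4" for i
      using edge[OF that] unfolding verts_def by blast
    have vsub: "verts (link ?K s) \<subseteq> {c 0, c 1, c 2, c 3}"
    proof
      fix v assume "v \<in> verts (link ?K s)"
      then obtain \<tau> where "\<tau> \<in> cycle_complex 4 c" "v \<in> \<tau>" unfolding verts_def lk by blast
      then obtain i where "i < 4" "v = c i \<or> v = c ((i+1) mod 4)" unfolding cycle_complex_def by blast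
      moreover have "(i+1) mod 4 < 4" by simp
      ultimately obtain j where "j < (4::nat)" "v = c j" by blast
      then have "j = 0 \<or> j = 1 \<or> j = 2 \<or> j = 3" by auto
      then show "v \<in> {c 0, c 1, c 2, c 3}" using \<open>v = c j\<close> by auto
    qed
    have ds: "s \<noteq> c 0" "s \<noteq> c 1" "s \<noteq> c 2" "s \<noteq> c 3" using sn vin[of 0] vin[of 1] vin[of 2] vin[of 3] by auto
    have cS: "c 0 \<in> S" "c 1 \<in> S" "c 2 \<in> S" "c 3 \<in> S" using vS vin[of 0] vin[of 1] vin[of 2] vin[of 3] by auto
    have tri_of: "{s, c i, c ((i+1) mod 4)} \<in> ?K" if ii: "i < 4" for i
    proof -
      obtain \<sigma> where "\<sigma> \<in> ?K" "s \<in> \<sigma>" "{c i, c ((i+1) mod 4)} \<subseteq> \<sigma>"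
        using edge[OF ii] unfolding link_def by blast
      then show ?thesis using down[of \<sigma> "{s, c i, c ((i+1) mod 4)}"] by blast
    qed
    have t0: "{s, c 0, c 1} \<in> ?K" using tri_of[of 0] by simp
    have e12: "((1::nat)+1) mod 4 = 2" by simp
    have t1: "{s, c 1, c 2} \<in> ?K" using tri_of[of 1, unfolded e12] by simp
    have t2: "{s, c 2, c 3} \<in> ?K" using tri_of[of 2] by simp
    have t3: "{s, c 3, c 0} \<in> ?K" using tri_of[of 3] by simp
    have m0: "m (c 0) (c 1) = 2" using mc[rule_format, of 0] by simp
    have m1: "m (c 1) (c 2) = 2" using mc[rule_format, of 1, unfolded e12] by simp
    have m2: "m (c 2) (c 3) = 2" using mc[rule_format, of 2] by simp
    have m3: "m (c 3) (c 0) = 2" using mc[rule_format, of 3] by simp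
    have no02: "{c 0, c 2} \<notin> ?K"
    proof
      assume "{c 0, c 2} \<in> ?K"
      then have "suspension_of_ngon ?K 3"
        by (intro DIAG[OF cm tri _ _ _ _ _ _ _ _ _ _ cS t0 t1 t2 t3 m0 m1 m2 m3]) (use d ds in auto)
      then show False using ns by contradiction
    qed
    have no13: "{c 1, c 3} \<notin> ?K"
    proof
      assume "{c 1, c 3} \<in> ?K"
      then have "suspension_of_ngon ?K 3"
        by (intro DIAG[OF cm tri _ _ _ _ _ _ _ _ _ _ cS(2,3,4,1) t1 t2 t3 t0 m1 m2 m3 m0]) (use d ds in auto)
      then show False using ns by contradiction
    qed
    have lf: "\<sigma> \<in> link ?K s" if \<sigma>: "\<sigma> \<in> ?K" "\<sigma> \<subseteq> verts (link ?K s)" for \<sigma>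
    proof -
      have sub: "\<sigma> \<subseteq> {c 0, c 1, c 2, c 3}" using \<sigma>(2) vsub by blast
      have n02: "\<not> (c 0 \<in> \<sigma> \<and> c 2 \<in> \<sigma>)"
      proof
        assume "c 0 \<in> \<sigma> \<and> c 2 \<in> \<sigma>"
        then have "{c 0, c 2} \<in> ?K" by (intro down[OF \<sigma>(1)]) auto
        then show False using no02 by contradiction
      qed
      have n13: "\<not> (c 1 \<in> \<sigma> \<and> c 3 \<in> \<sigma>)"
      proof
        assume "c 1 \<in> \<sigma> \<and> c 3 \<in> \<sigma>"
        then have "{c 1, c 3} \<in> ?K" by (intro down[OF \<sigma>(1)]) auto
        then show False using no13 by contradiction
      qed
      have ns: "s \<notin> \<sigma>" using \<sigma>(2) sn by blast
      have "\<sigma> \<subseteq> {s, c 0, c 1} \<or> \<sigma> \<subseteq> {s, c 1, c 2} \<or> \<sigma> \<subseteq> {s, c 2, c 3} \<or> \<sigma> \<subseteq> {s, c 3, c 0}"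
      proof (cases "c 0 \<in> \<sigma>")
        case True
        then have "c 2 \<notin> \<sigma>" using n02 by blast
        show ?thesis
        proof (cases "c 1 \<in> \<sigma>")
          case True
          then have "c 3 \<notin> \<sigma>" using n13 by blast
          then have "\<sigma> \<subseteq> {s, c 0, c 1}" using sub \<open>c 2 \<notin> \<sigma>\<close> by auto
          then show ?thesis by blast
        next
          case False
          then have "\<sigma> \<subseteq> {s, c 3, c 0}" using sub \<open>c 2 \<notin> \<sigma>\<close> by auto
          then show ?thesis by blast
        qed
      next
        case False
        show ?thesis
        proof (cases "c 1 \<in> \<sigma>")
          case True
          then have "c 3 \<notin> \<sigma>" using n13 by blast
          then have "\<sigma> \<subseteq> {s, c 1, c 2}" using sub \<open>c 0 \<notin> \<sigma>\<close> by auto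
          then show ?thesis by blast
        next
          case False
          then have "\<sigma> \<subseteq> {s, c 2, c 3}" using sub \<open>c 0 \<notin> \<sigma>\<close> by auto
          then show ?thesis by blast
        qed
      qed
      then show ?thesis
      proof (elim disjE)
        assume "\<sigma> \<subseteq> {s, c 0, c 1}" then show ?thesis using link_mem[OF \<sigma>(1) t0 _ _ ns] by simp
      next
        assume "\<sigma> \<subseteq> {s, c 1, c 2}" then show ?thesis using link_mem[OF \<sigma>(1) t1 _ _ ns] by simp
      next
        assume "\<sigma> \<subseteq> {s, c 2, c 3}" then show ?thesis using link_mem[OF \<sigma>(1) t2 _ _ ns] by simp
      next
        assume "\<sigma> \<subseteq> {s, c 3, c 0}" then show ?thesis using link_mem[OF \<sigma>(1) t3 _ _ ns] by simp
      qed
    qed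
    show "full_subcomplex ?K (link ?K s)" using full_from[OF dc] lf by blast
    show "full_subcomplex ?K (star ?K s)" using full_from[OF dc] lf by blast
  qed
qed

end
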